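(* With $T$ and $\tilde S$ as in the context, $p_T/2\le p_{\tilde S}\le p_T$.
   Context: Barycentric subdivisions: $T_0$ is an equilateral triangle with vertices $v_0,v_1,v_2$. $T_n$ is obtained by subdividing every triangular face $\{x,y,z\}$ of $T_{n-1}$ into the six triangles $\{x,m_{xy},c\},\{m_{xy},y,c\},\{y,m_{yz},c\},\{m_{yz},z,c\},\{z,m_{zx},c\},\{m_{zx},x,c\}$, where $m_{uv}$ are side midpoints and $c$ is the barycenter. As a simple graph, $T_n$ has the vertices of this triangulation and the sides of its $6^n$ faces as edges. $\tilde S_n$ is the multigraph on the vertex set of $T_n$ containing, for each face of $T_n$, its own copy of each of the face's three sides. Sides shared by two faces, i.e. edges not on the boundary of $T_0$, are therefore doubled, and boundary edges are single. This is the graph obtained from the $n$-th approximation of the non-p.c.f. Sierpinski gasket by identifying midpoints of parallel edges. $T$ and $\tilde S$ denote the limits. Bond percolation with parameter $p$: each edge receives an i.i.d. uniform $[0,1]$ label $\omega(e)$ and is open if $\omega(e)<p$. For $G\in\{T,\tilde S\}$ with approximations $G_n$, $p_G=\sup\{p\in[0,1]:\mathbb{P}_p(\text{there is an open path from } v_0 \text{ to } v_1 \text{ in } G_n)\to0 \text{ as } n\to\infty\}$. *)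

theory Defs
  imports "HOL-Probability.Probability"
begin

definition bv0 :: complex where "bv0 = 0"
definition bv1 :: complex where "bv1 = 1"
definition bv2 :: complex where "bv2 = Complex (1/2) (sqrt 3 / 2)"

type_synonym face = "complex \<times> complex \<times> complex"

definition mid :: "complex \<Rightarrow> complex \<Rightarrow> complex" where
  "mid x y = (x + y) / 2"

definition subdivide :: "face \<Rightarrow> face set" where
  "subdivide f = (case f of (x, y, z) \<Rightarrow>
     (let c = (x + y + z) / 3 in
      {(x, mid x y, c), (mid x y, y, c), (y, mid y z, c), (mid y z, z, c),
       (z, mid z x, c), (mid z x, x, c)}))"

primrec bary_faces :: "nat \<Rightarrow> face set" where
  "bary_faces 0 = {(bv0, bv1, bv2)}"
| "bary_faces (Suc n) = \<Union> (subdivide ` bary_faces n)"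

definition side :: "face \<Rightarrow> nat \<Rightarrow> complex set" where
  "side f i = (case f of (x, y, z) \<Rightarrow>
     (if i = 0 then {x, y} else if i = 1 then {y, z} else {z, x}))"

text \<open>Simple graph T_n: edges are the sides of the faces (as unordered pairs);
  each edge's endpoint set is the edge itself.\<close>
definition T_edges :: "nat \<Rightarrow> complex set set" where
  "T_edges n = {side f i | f i. f \<in> bary_faces n \<and> i < 3}"

text \<open>Multigraph S~_n: one copy of each side per face; an edge is (face, side index).\<close>
definition S_edges :: "nat \<Rightarrow> (face \<times> nat) set" where
  "S_edges n = bary_faces n \<times> {0, 1, 2}"

definition S_ends :: "face \<times> nat \<Rightarrow> complex set" where
  "S_ends e = side (fst e) (snd e)"

definition open_connected ::
  "'e set \<Rightarrow> ('e \<Rightarrow> complex set) \<Rightarrow> ('e \<Rightarrow> bool) \<Rightarrow> complex \<Rightarrow> complex \<Rightarrow> bool" where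
  "open_connected E ends \<omega> u v \<longleftrightarrow>
     (u, v) \<in> {(x, y). \<exists>e\<in>E. \<omega> e \<and> ends e = {x, y}}\<^sup>*"

text \<open>Bond percolation with parameter p: edges independently open with probability p
  (equivalently, uniform labels below p).\<close>
definition perc_prob ::
  "'e set \<Rightarrow> ('e \<Rightarrow> complex set) \<Rightarrow> real \<Rightarrow> complex \<Rightarrow> complex \<Rightarrow> real" where
  "perc_prob E ends p u v =
     measure_pmf.prob (Pi_pmf E False (\<lambda>_. bernoulli_pmf p))
       {\<omega>. open_connected E ends \<omega> u v}"

definition crit_prob :: "(nat \<Rightarrow> 'e set) \<Rightarrow> ('e \<Rightarrow> complex set) \<Rightarrow> real" where
  "crit_prob G ends =
     Sup {p \<in> {0..1}. (\<lambda>n. perc_prob (G n) ends p bv0 bv1) \<longlonglongrightarrow> 0}"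

definition p_T :: real where "p_T = crit_prob T_edges id"
definition p_S :: real where "p_S = crit_prob S_edges S_ends"

end

theory Submission
  imports Defs
begin


lemma bind_dom:
  assumes "\<And>x y. x \<in> set_pmf M \<Longrightarrow> y \<in> set_pmf (N x) \<Longrightarrow> y \<in> X \<Longrightarrow> x \<in> B"
  shows "measure_pmf.prob (bind_pmf M N) X \<le> measure_pmf.prob M B"
proof -
  have "emeasure (measure_pmf (bind_pmf M N)) X = (\<integral>\<^sup>+x. emeasure (N x) X \<partial>M)" by simp
  also have "\<dots> \<le> (\<integral>\<^sup>+x. indicator B x \<partial>M)"
  proof (rule nn_integral_mono_AE)
    show "AE x in measure_pmf M. emeasure (measure_pmf (N x)) X \<le> indicator B x"
    proof (rule AE_pmfI)
      fix x assume x: "x \<in> set_pmf M"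
      show "emeasure (measure_pmf (N x)) X \<le> indicator B x"
      proof (cases "x \<in> B")
        case True then show ?thesis by (simp add: measure_pmf.emeasure_le_1)
      next
        case False
        then have "X \<inter> set_pmf (N x) = {}" using assms x by blast
        then have "emeasure (measure_pmf (N x)) X = 0"
          by (simp add: measure_pmf.emeasure_eq_measure measure_pmf_zero_iff Int_commute)
        then show ?thesis by simp
      qed
    qed
  qed
  also have "\<dots> = emeasure (measure_pmf M) B" by simp
  finally show ?thesis by (simp add: measure_pmf.emeasure_eq_measure)
qed

lemma oc_mono:
  assumes "\<And>e. e \<in> E1 \<Longrightarrow> \<omega>1 e \<Longrightarrow> \<exists>e'\<in>E2. \<omega>2 e' \<and> ends2 e' = ends1 e"
    and "open_connected E1 ends1 \<omega>1 u v"
  shows "open_connected E2 ends2 \<omega>2 u v"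
proof -
  have "{(x, y). \<exists>e\<in>E1. \<omega>1 e \<and> ends1 e = {x, y}} \<subseteq> {(x, y). \<exists>e\<in>E2. \<omega>2 e \<and> ends2 e = {x, y}}"
    using assms(1) by fastforce
  then show ?thesis using assms(2) unfolding open_connected_def
    using rtrancl_mono by blast
qed

lemma bern_split:
  assumes "0 \<le> p" "p \<le> q" "q \<le> 1" "q > 0"
  shows "bernoulli_pmf p = bind_pmf (bernoulli_pmf q) (\<lambda>a. if a then bernoulli_pmf (p/q) else return_pmf False)"
proof (rule pmf_eqI)
  fix b :: bool
  have r: "0 \<le> p/q" "p/q \<le> 1" using assms by auto
  show "pmf (bernoulli_pmf p) b = pmf (bind_pmf (bernoulli_pmf q) (\<lambda>a. if a then bernoulli_pmf (p/q) else return_pmf False)) b"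
    using assms r by (cases b) (auto simp: pmf_bind field_simps)
qed

lemma perc_mono:
  assumes fin: "finite E" and "0 \<le> p" "p \<le> q" "q \<le> 1"
  shows "perc_prob E ends p u v \<le> perc_prob E ends q u v"
proof (cases "q = 0")
  case True then show ?thesis using assms by simp
next
  case False
  then have q: "q > 0" using assms by simp
  have "Pi_pmf E False (\<lambda>_. bernoulli_pmf p) =
    Pi_pmf E False (\<lambda>_. bind_pmf (bernoulli_pmf q) (\<lambda>a. if a then bernoulli_pmf (p/q) else return_pmf False))"
    using bern_split[OF assms(2,3,4) q] by simp
  also have "\<dots> = bind_pmf (Pi_pmf E False (\<lambda>_. bernoulli_pmf q))
      (\<lambda>f. Pi_pmf E False (\<lambda>x. if f x then bernoulli_pmf (p/q) else return_pmf False))"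
    by (rule Pi_pmf_bind[OF fin])
  finally have eq: "Pi_pmf E False (\<lambda>_. bernoulli_pmf p) = \<dots>" .
  show ?thesis unfolding perc_prob_def eq
  proof (rule bind_dom)
    fix f g
    assume f: "f \<in> set_pmf (Pi_pmf E False (\<lambda>_. bernoulli_pmf q))"
      and g: "g \<in> set_pmf (Pi_pmf E False (\<lambda>x. if f x then bernoulli_pmf (p / q) else return_pmf False))"
      and c: "g \<in> {\<omega>. open_connected E ends \<omega> u v}"
    have le: "g e \<Longrightarrow> f e" for e
    proof -
      assume ge: "g e"
      from set_Pi_pmf_subset'[OF fin, of False] g have "g \<in> PiE_dflt E False (set_pmf \<circ> (\<lambda>x. if f x then bernoulli_pmf (p / q) else return_pmf False))" by blast
      then show "f e" using ge unfolding PiE_dflt_def by (cases "e \<in> E"; cases "f e") auto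
    qed
    show "f \<in> {\<omega>. open_connected E ends \<omega> u v}"
      using c le oc_mono[of E g E f ends ends u v] by blast
  qed
qed

lemma perc_inj:
  assumes fin: "finite E2" and inj: "inj_on g E1" and sub: "g ` E1 \<subseteq> E2" and d: "d \<notin> E2"
    and ends: "\<And>e. e \<in> E1 \<Longrightarrow> ends2 (g e) = ends1 e"
  shows "perc_prob E1 ends1 p u v \<le> perc_prob E2 ends2 p u v"
proof -
  define g' where "g' x = (if x \<in> E1 then g x else d)" for x
  have fin1: "finite E1" using finite_imageD[OF finite_subset[OF sub fin] inj] .
  have bij: "bij_betw g' E1 (g ` E1)" using inj unfolding g'_def bij_betw_def inj_on_def by auto
  have out: "x \<notin> E1 \<Longrightarrow> g' x \<notin> g ` E1" for x using sub d unfolding g'_def by auto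
  let ?B = "\<lambda>_. bernoulli_pmf p"
  have "Pi_pmf E1 False ?B = map_pmf (\<lambda>\<omega>. \<omega> \<circ> g') (Pi_pmf (g ` E1) False ?B)"
    by (rule Pi_pmf_bij_betw[OF fin1 bij out])
  also have "Pi_pmf (g ` E1) False ?B = map_pmf (\<lambda>f x. if x \<in> g ` E1 then f x else False) (Pi_pmf E2 False ?B)"
    by (rule Pi_pmf_subset[OF fin sub])
  finally have eq: "Pi_pmf E1 False ?B = map_pmf (\<lambda>\<omega>. (\<lambda>x. if x \<in> g ` E1 then \<omega> x else False) \<circ> g') (Pi_pmf E2 False ?B)"
    by (simp only: map_pmf_comp comp_def)
  show ?thesis unfolding perc_prob_def eq measure_map_pmf
  proof (rule measure_pmf.finite_measure_mono)
    show "{\<omega>. open_connected E2 ends2 \<omega> u v} \<in> measure_pmf.events (Pi_pmf E2 False ?B)" by simp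
    show "(\<lambda>\<omega>. (\<lambda>x. if x \<in> g ` E1 then \<omega> x else False) \<circ> g') -` {\<omega>. open_connected E1 ends1 \<omega> u v}
        \<subseteq> {\<omega>. open_connected E2 ends2 \<omega> u v}"
    proof clarify
      fix \<omega> assume c: "open_connected E1 ends1 ((\<lambda>x. if x \<in> g ` E1 then \<omega> x else False) \<circ> g') u v"
      show "open_connected E2 ends2 \<omega> u v"
      proof (rule oc_mono[OF _ c])
        fix e assume e: "e \<in> E1" "((\<lambda>x. if x \<in> g ` E1 then \<omega> x else False) \<circ> g') e"
        then show "\<exists>e'\<in>E2. \<omega> e' \<and> ends2 e' = ends1 e"
        proof -
          have ge: "g e \<in> g ` E1" using e(1) by blast
          have "\<omega> (g e)" using e(2) ge e(1) unfolding g'_def comp_def by simp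
          moreover have "g e \<in> E2" using sub ge by blast
          ultimately show ?thesis using ends[OF e(1)] by blast
        qed
      qed
    qed
  qed
qed

lemma bern_or:
  assumes "0 \<le> p" "p \<le> 1"
  shows "bernoulli_pmf (2*p - p^2) = bind_pmf (bernoulli_pmf p) (\<lambda>a. bind_pmf (bernoulli_pmf p) (\<lambda>b. return_pmf (a \<or> b)))"
proof (rule pmf_eqI)
  fix c :: bool
  have pp: "p * p \<le> 1 * p" using assms by (intro mult_right_mono) auto
  have sq: "0 \<le> (1 - p) * (1 - p)" by simp
  have q: "0 \<le> 2*p - p^2" "2*p - p^2 \<le> 1" using assms pp sq by (auto simp: power2_eq_square algebra_simps)
  show "pmf (bernoulli_pmf (2*p - p^2)) c = pmf (bind_pmf (bernoulli_pmf p) (\<lambda>a. bind_pmf (bernoulli_pmf p) (\<lambda>b. return_pmf (a \<or> b)))) c"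
    using assms q by (cases c) (auto simp: pmf_bind power2_eq_square algebra_simps)
qed

lemma Pi_or:
  assumes fin: "finite E" and "0 \<le> p" "p \<le> 1"
  shows "map_pmf (\<lambda>(a, b) s. s \<in> E \<and> (a s \<or> b s))
           (pair_pmf (Pi_pmf E False (\<lambda>_. bernoulli_pmf p)) (Pi_pmf E False (\<lambda>_. bernoulli_pmf p)))
         = Pi_pmf E False (\<lambda>_. bernoulli_pmf (2*p - p^2))"
proof -
  let ?B = "bernoulli_pmf p"
  let ?P = "Pi_pmf E False (\<lambda>_. ?B)"
  have "Pi_pmf E False (\<lambda>_. bernoulli_pmf (2*p - p^2)) =
        Pi_pmf E False (\<lambda>_. bind_pmf ?B (\<lambda>a. bind_pmf ?B (\<lambda>b. return_pmf (a \<or> b))))"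
    using bern_or[OF assms(2,3)] by simp
  also have "\<dots> = bind_pmf ?P (\<lambda>f. Pi_pmf E False (\<lambda>x. bind_pmf ?B (\<lambda>b. return_pmf (f x \<or> b))))"
    by (rule Pi_pmf_bind[OF fin])
  also have "\<dots> = bind_pmf ?P (\<lambda>f. bind_pmf ?P (\<lambda>g. Pi_pmf E False (\<lambda>x. return_pmf (f x \<or> g x))))"
    by (intro bind_pmf_cong refl Pi_pmf_bind[OF fin])
  also have "\<dots> = bind_pmf ?P (\<lambda>f. bind_pmf ?P (\<lambda>g. return_pmf (\<lambda>s. s \<in> E \<and> (f s \<or> g s))))"
    using fin by (intro bind_pmf_cong refl) (simp add: fun_eq_iff)
  also have "\<dots> = map_pmf (\<lambda>(a, b) s. s \<in> E \<and> (a s \<or> b s)) (pair_pmf ?P ?P)"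
    by (simp add: pair_pmf_def map_pmf_def bind_assoc_pmf bind_return_pmf)
  finally show ?thesis by simp
qed

lemma perc_or:
  assumes fin: "finite E" and p: "0 \<le> p" "p \<le> 1"
  shows "perc_prob (E \<times> (UNIV :: bool set)) (\<lambda>x. ends (fst x)) p u v \<le> perc_prob E ends (2*p - p^2) u v"
proof -
  let ?B = "\<lambda>_. bernoulli_pmf p"
  let ?P = "Pi_pmf E False ?B"
  define ET where "ET = E \<times> {True}"
  define EF where "EF = E \<times> {False}"
  have finT: "finite ET" "finite EF" using fin by (auto simp: ET_def EF_def)
  have un: "E \<times> (UNIV :: bool set) = ET \<union> EF" by (auto simp: ET_def EF_def)
  have U: "Pi_pmf (E \<times> (UNIV :: bool set)) False ?B =
      map_pmf (\<lambda>(f,g) x. if x \<in> ET then f x else g x) (pair_pmf (Pi_pmf ET False ?B) (Pi_pmf EF False ?B))"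
    unfolding un by (rule Pi_pmf_union) (use finT in \<open>auto simp: ET_def EF_def\<close>)
  have BT: "?P = map_pmf (\<lambda>\<omega>. \<omega> \<circ> (\<lambda>s. (s, True))) (Pi_pmf ET False ?B)"
    by (rule Pi_pmf_bij_betw[OF fin]) (auto simp: ET_def bij_betw_def inj_on_def)
  have BF: "?P = map_pmf (\<lambda>\<omega>. \<omega> \<circ> (\<lambda>s. (s, False))) (Pi_pmf EF False ?B)"
    by (rule Pi_pmf_bij_betw[OF fin]) (auto simp: EF_def bij_betw_def inj_on_def)
  define \<tau> where "\<tau> \<omega> s = (s \<in> E \<and> (\<omega> (s, True) \<or> \<omega> (s, False)))" for \<omega> :: "'a \<times> bool \<Rightarrow> bool" and s
  define F where "F = (\<lambda>(a, b) s. s \<in> E \<and> (a s \<or> b s))" for a b :: "'a \<Rightarrow> bool"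
  have "map_pmf \<tau> (Pi_pmf (E \<times> (UNIV :: bool set)) False ?B) =
      map_pmf (\<lambda>x. \<tau> ((\<lambda>(f,g) x. if x \<in> ET then f x else g x) x)) (pair_pmf (Pi_pmf ET False ?B) (Pi_pmf EF False ?B))"
    unfolding U by (simp add: map_pmf_comp)
  also have "\<dots> = map_pmf (\<lambda>x. F ((\<lambda>(a, b). (a \<circ> (\<lambda>s. (s, True)), b \<circ> (\<lambda>s. (s, False)))) x))
      (pair_pmf (Pi_pmf ET False ?B) (Pi_pmf EF False ?B))"
    by (intro map_pmf_cong refl) (auto simp: \<tau>_def F_def ET_def fun_eq_iff)
  also have "\<dots> = map_pmf F (map_pmf (\<lambda>(a, b). (a \<circ> (\<lambda>s. (s, True)), b \<circ> (\<lambda>s. (s, False))))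
      (pair_pmf (Pi_pmf ET False ?B) (Pi_pmf EF False ?B)))"
    by (simp add: map_pmf_comp)
  also have "\<dots> = map_pmf F (pair_pmf ?P ?P)"
    by (subst map_pair) (simp add: BT[symmetric] BF[symmetric])
  also have "\<dots> = Pi_pmf E False (\<lambda>_. bernoulli_pmf (2*p - p^2))"
    unfolding F_def by (rule Pi_or[OF fin p])
  finally have eq: "map_pmf \<tau> (Pi_pmf (E \<times> (UNIV :: bool set)) False ?B) = Pi_pmf E False (\<lambda>_. bernoulli_pmf (2*p - p^2))" .
  have "perc_prob (E \<times> (UNIV :: bool set)) (\<lambda>x. ends (fst x)) p u v \<le>
      measure_pmf.prob (Pi_pmf (E \<times> (UNIV :: bool set)) False ?B) (\<tau> -` {\<omega>. open_connected E ends \<omega> u v})"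
    unfolding perc_prob_def
  proof (rule measure_pmf.finite_measure_mono)
    show "\<tau> -` {\<omega>. open_connected E ends \<omega> u v} \<in> measure_pmf.events (Pi_pmf (E \<times> (UNIV :: bool set)) False ?B)" by simp
    show "{\<omega>. open_connected (E \<times> (UNIV :: bool set)) (\<lambda>x. ends (fst x)) \<omega> u v} \<subseteq> \<tau> -` {\<omega>. open_connected E ends \<omega> u v}"
    proof
      fix \<omega> assume "\<omega> \<in> {\<omega>. open_connected (E \<times> (UNIV :: bool set)) (\<lambda>x. ends (fst x)) \<omega> u v}"
      then have c: "open_connected (E \<times> (UNIV :: bool set)) (\<lambda>x. ends (fst x)) \<omega> u v" by simp
      have "open_connected E ends (\<tau> \<omega>) u v"
      proof (rule oc_mono[OF _ c])
        fix e assume e: "e \<in> E \<times> (UNIV :: bool set)" "\<omega> e"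
        obtain s b where sb: "e = (s, b)" by (cases e)
        have "\<tau> \<omega> s" using e sb unfolding \<tau>_def by (cases b) auto
        then show "\<exists>e'\<in>E. \<tau> \<omega> e' \<and> ends e' = ends (fst e)" using e sb by auto
      qed
      then show "\<omega> \<in> \<tau> -` {\<omega>. open_connected E ends \<omega> u v}" by simp
    qed
  qed
  also have "\<dots> = perc_prob E ends (2*p - p^2) u v"
    unfolding perc_prob_def eq[symmetric] by simp
  finally show ?thesis .
qed



definition cross :: "complex \<Rightarrow> complex \<Rightarrow> real" where
  "cross a b = Re a * Im b - Im a * Re b"

definition Dt :: "face \<Rightarrow> real" where
  "Dt f = (case f of (x, y, z) \<Rightarrow> cross (y - x) (z - x))"

definition otri :: "face \<Rightarrow> complex set" where
  "otri f = (case f of (x, y, z) \<Rightarrow>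
     {of_real a * x + of_real b * y + of_real c * z | a b c. a > 0 \<and> b > 0 \<and> c > 0 \<and> a + b + c = 1})"

lemma otri_iff: "p \<in> otri (x, y, z) \<longleftrightarrow>
   (\<exists>a b c. a > 0 \<and> b > 0 \<and> c > 0 \<and> a + b + c = 1 \<and> p = of_real a * x + of_real b * y + of_real c * z)"
  unfolding otri_def by blast

lemma otri_rot1: "p \<in> otri (x, y, z) \<Longrightarrow> p \<in> otri (y, z, x)"
proof -
  assume "p \<in> otri (x, y, z)"
  then obtain a b c where h: "a > 0" "b > 0" "c > 0" "a + b + c = 1" "p = of_real a * x + of_real b * y + of_real c * z"
    unfolding otri_iff by blast
  have "b + c + a = 1" "p = of_real b * y + of_real c * z + of_real a * x" using h by (simp_all add: algebra_simps)
  then show ?thesis unfolding otri_iff using h by blast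
qed

lemma otri_swap1: "p \<in> otri (x, y, z) \<Longrightarrow> p \<in> otri (y, x, z)"
proof -
  assume "p \<in> otri (x, y, z)"
  then obtain a b c where h: "a > 0" "b > 0" "c > 0" "a + b + c = 1" "p = of_real a * x + of_real b * y + of_real c * z"
    unfolding otri_iff by blast
  have "b + a + c = 1" "p = of_real b * y + of_real a * x + of_real c * z" using h by (simp_all add: algebra_simps)
  then show ?thesis unfolding otri_iff using h by blast
qed

lemma otri_rot: "otri (x, y, z) = otri (y, z, x)"
  using otri_rot1[of _ x y z] otri_rot1[of _ y z x] otri_rot1[of _ z x y] by blast

lemma otri_swap: "otri (x, y, z) = otri (y, x, z)"
  using otri_swap1[of _ x y z] otri_swap1[of _ y x z] by blast

lemma Dt_rot: "Dt (x, y, z) = Dt (y, z, x)"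
  unfolding Dt_def cross_def by (simp add: algebra_simps)

lemma Dt_swap: "Dt (x, y, z) = - Dt (y, x, z)"
  unfolding Dt_def cross_def by (simp add: algebra_simps)

lemma coords_unique0:
  assumes D: "Dt (x, y, z) \<noteq> 0" and s: "a + b + c = 0"
    and e: "of_real a * x + of_real b * y + of_real c * z = 0"
  shows "a = 0 \<and> b = 0 \<and> c = 0"
proof -
  have a: "a = - b - c" using s by simp
  have e': "of_real b * (y - x) + of_real c * (z - x) = 0"
    using e unfolding a by (simp add: algebra_simps)
  have re: "b * Re (y - x) + c * Re (z - x) = 0" using arg_cong[OF e', of Re] by simp
  have im: "b * Im (y - x) + c * Im (z - x) = 0" using arg_cong[OF e', of Im] by simp
  have "b * Dt (x, y, z) = 0"
  proof -
    have "b * Dt (x, y, z) = (b * Re (y - x) + c * Re (z - x)) * Im (z - x) - (b * Im (y - x) + c * Im (z - x)) * Re (z - x)"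
      unfolding Dt_def cross_def by (simp add: algebra_simps)
    then show ?thesis using re im by simp
  qed
  moreover have "c * Dt (x, y, z) = 0"
  proof -
    have "c * Dt (x, y, z) = (b * Im (y - x) + c * Im (z - x)) * Re (y - x) - (b * Re (y - x) + c * Re (z - x)) * Im (y - x)"
      unfolding Dt_def cross_def by (simp add: algebra_simps)
    then show ?thesis using re im by simp
  qed
  ultimately show ?thesis using D a by simp
qed

lemma coords_unique:
  assumes D: "Dt (x, y, z) \<noteq> 0" and s: "a + b + c = a' + b' + c'"
    and e: "of_real a * x + of_real b * y + of_real c * z = of_real a' * x + of_real b' * y + of_real c' * z"
  shows "a = a' \<and> b = b' \<and> c = c'"
proof -
  have "of_real (a - a') * x + of_real (b - b') * y + of_real (c - c') * z = 0"
    using e by (simp add: algebra_simps)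
  from coords_unique0[OF D _ this] s show ?thesis by simp
qed

definition child :: "face \<Rightarrow> nat \<Rightarrow> face" where
  "child f i = (case f of (x, y, z) \<Rightarrow> (let c = (x + y + z) / 3 in
     if i = 0 then (x, mid x y, c) else if i = 1 then (mid x y, y, c)
     else if i = 2 then (y, mid y z, c) else if i = 3 then (mid y z, z, c)
     else if i = 4 then (z, mid z x, c) else (mid z x, x, c)))"

lemma subdivide_child: "subdivide f = child f ` {..<6}"
proof -
  have "{..<6::nat} = {0,1,2,3,4,5}" by auto
  then show ?thesis
    by (cases f) (simp add: subdivide_def child_def Let_def insert_commute)
qed

definition ordp :: "nat \<Rightarrow> real \<Rightarrow> real \<Rightarrow> real \<Rightarrow> bool" where
  "ordp i A B C = (if i = 0 then A > B \<and> B > C else if i = 1 then B > A \<and> A > C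
     else if i = 2 then B > C \<and> C > A else if i = 3 then C > B \<and> B > A
     else if i = 4 then C > A \<and> A > B else A > C \<and> C > B)"

lemma ordp_unique: "i < 6 \<Longrightarrow> j < 6 \<Longrightarrow> ordp i A B C \<Longrightarrow> ordp j A B C \<Longrightarrow> i = j"
  unfolding ordp_def by (auto split: if_splits)

lemma Dt_child: "Dt (child f i) = Dt f / 6"
proof (cases f)
  case (fields x y z)
  show ?thesis unfolding fields
    by (simp add: child_def Dt_def cross_def mid_def Let_def; simp add: field_simps; simp add: algebra_simps)
qed

lemma child_coords:
  assumes i: "i < 6" and p: "p \<in> otri (child (x, y, z) i)"
  shows "\<exists>A B C. A > 0 \<and> B > 0 \<and> C > 0 \<and> A + B + C = 1 \<and>
           p = of_real A * x + of_real B * y + of_real C * z \<and> ordp i A B C"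
proof -
  let ?c = "(x + y + z) / 3"
  have cases: "i = 0 \<or> i = 1 \<or> i = 2 \<or> i = 3 \<or> i = 4 \<or> i = 5" using i by auto
  then show ?thesis
  proof (elim disjE)
    assume i0: "i = 0"
    have pc: "p \<in> otri (x, mid x y, ?c)" using p i0 by (simp add: child_def Let_def)
    from pc[unfolded otri_iff] obtain a b c where h: "a > 0" "b > 0" "c > 0" "a + b + c = 1"
      "p = of_real a * x + of_real b * mid x y + of_real c * ?c"
      by blast
    show ?thesis
      by (rule exI[of _ "a + b/2 + c/3"], rule exI[of _ "b/2 + c/3"], rule exI[of _ "c/3"])
         (use h i0 in \<open>auto simp: ordp_def mid_def algebra_simps add_divide_distrib\<close>)
  next
    assume i0: "i = 1"
    have pc: "p \<in> otri (mid x y, y, ?c)" using p i0 by (simp add: child_def Let_def)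
    from pc[unfolded otri_iff] obtain a b c where h: "a > 0" "b > 0" "c > 0" "a + b + c = 1"
      "p = of_real a * mid x y + of_real b * y + of_real c * ?c"
      by blast
    show ?thesis
      by (rule exI[of _ "a/2 + c/3"], rule exI[of _ "a/2 + b + c/3"], rule exI[of _ "c/3"])
         (use h i0 in \<open>auto simp: ordp_def mid_def algebra_simps add_divide_distrib\<close>)
  next
    assume i0: "i = 2"
    have pc: "p \<in> otri (y, mid y z, ?c)" using p i0 by (simp add: child_def Let_def)
    from pc[unfolded otri_iff] obtain a b c where h: "a > 0" "b > 0" "c > 0" "a + b + c = 1"
      "p = of_real a * y + of_real b * mid y z + of_real c * ?c"
      by blast
    show ?thesis
      by (rule exI[of _ "c/3"], rule exI[of _ "a + b/2 + c/3"], rule exI[of _ "b/2 + c/3"])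
         (use h i0 in \<open>auto simp: ordp_def mid_def algebra_simps add_divide_distrib\<close>)
  next
    assume i0: "i = 3"
    have pc: "p \<in> otri (mid y z, z, ?c)" using p i0 by (simp add: child_def Let_def)
    from pc[unfolded otri_iff] obtain a b c where h: "a > 0" "b > 0" "c > 0" "a + b + c = 1"
      "p = of_real a * mid y z + of_real b * z + of_real c * ?c"
      by blast
    show ?thesis
      by (rule exI[of _ "c/3"], rule exI[of _ "a/2 + c/3"], rule exI[of _ "a/2 + b + c/3"])
         (use h i0 in \<open>auto simp: ordp_def mid_def algebra_simps add_divide_distrib\<close>)
  next
    assume i0: "i = 4"
    have pc: "p \<in> otri (z, mid z x, ?c)" using p i0 by (simp add: child_def Let_def)
    from pc[unfolded otri_iff] obtain a b c where h: "a > 0" "b > 0" "c > 0" "a + b + c = 1"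
      "p = of_real a * z + of_real b * mid z x + of_real c * ?c"
      by blast
    show ?thesis
      by (rule exI[of _ "b/2 + c/3"], rule exI[of _ "c/3"], rule exI[of _ "a + b/2 + c/3"])
         (use h i0 in \<open>auto simp: ordp_def mid_def algebra_simps add_divide_distrib\<close>)
  next
    assume i0: "i = 5"
    have pc: "p \<in> otri (mid z x, x, ?c)" using p i0 by (simp add: child_def Let_def)
    from pc[unfolded otri_iff] obtain a b c where h: "a > 0" "b > 0" "c > 0" "a + b + c = 1"
      "p = of_real a * mid z x + of_real b * x + of_real c * ?c"
      by blast
    show ?thesis
      by (rule exI[of _ "a/2 + b + c/3"], rule exI[of _ "c/3"], rule exI[of _ "a/2 + c/3"])
         (use h i0 in \<open>auto simp: ordp_def mid_def algebra_simps add_divide_distrib\<close>)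
  qed
qed

lemma child_sub:
  assumes "i < 6" shows "otri (child (x, y, z) i) \<subseteq> otri (x, y, z)"
proof
  fix p assume "p \<in> otri (child (x, y, z) i)"
  from child_coords[OF assms this] show "p \<in> otri (x, y, z)" unfolding otri_iff by blast
qed

lemma child_disj:
  assumes D: "Dt (x, y, z) \<noteq> 0" and i: "i < 6" and j: "j < 6"
    and ne: "child (x, y, z) i \<noteq> child (x, y, z) j"
  shows "otri (child (x, y, z) i) \<inter> otri (child (x, y, z) j) = {}"
proof (rule ccontr)
  assume "otri (child (x, y, z) i) \<inter> otri (child (x, y, z) j) \<noteq> {}"
  then obtain p where p1: "p \<in> otri (child (x, y, z) i)" and p2: "p \<in> otri (child (x, y, z) j)" by blast
  obtain A B C where h1: "A + B + C = 1" "p = of_real A * x + of_real B * y + of_real C * z" "ordp i A B C"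
    using child_coords[OF i p1] by blast
  obtain A' B' C' where h2: "A' + B' + C' = 1" "p = of_real A' * x + of_real B' * y + of_real C' * z" "ordp j A' B' C'"
    using child_coords[OF j p2] by blast
  have "A = A' \<and> B = B' \<and> C = C'"
    by (rule coords_unique[OF D]) (use h1 h2 in auto)
  then have "i = j" using ordp_unique[OF i j] h1 h2 by simp
  then show False using ne by simp
qed

definition Inv :: "nat \<Rightarrow> bool" where
  "Inv n \<longleftrightarrow> (\<forall>f\<in>bary_faces n. Dt f \<noteq> 0) \<and>
     (\<forall>f\<in>bary_faces n. \<forall>g\<in>bary_faces n. f \<noteq> g \<longrightarrow> otri f \<inter> otri g = {})"

lemma Inv_all: "Inv n"
proof (induction n)
  case 0
  have "Dt (bv0, bv1, bv2) = sqrt 3 / 2" by (simp add: Dt_def cross_def bv0_def bv1_def bv2_def)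
  moreover have "sqrt 3 / 2 \<noteq> (0::real)" by simp
  ultimately have "Dt (bv0, bv1, bv2) \<noteq> 0" by argo
  then show ?case unfolding Inv_def by simp
next
  case (Suc n)
  have D: "\<forall>f\<in>bary_faces (Suc n). Dt f \<noteq> 0"
    using Suc.IH by (auto simp: Inv_def subdivide_child Dt_child)
  have "otri g1 \<inter> otri g2 = {}" if g1: "g1 \<in> bary_faces (Suc n)" and g2: "g2 \<in> bary_faces (Suc n)"
    and ne: "g1 \<noteq> g2" for g1 g2
  proof -
    obtain F1 i where F1: "F1 \<in> bary_faces n" "i < 6" "g1 = child F1 i"
      using g1 by (auto simp: subdivide_child)
    obtain F2 j where F2: "F2 \<in> bary_faces n" "j < 6" "g2 = child F2 j"
      using g2 by (auto simp: subdivide_child)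
    obtain x1 y1 z1 where e1: "F1 = (x1, y1, z1)" by (cases F1)
    obtain x2 y2 z2 where e2: "F2 = (x2, y2, z2)" by (cases F2)
    show ?thesis
    proof (cases "F1 = F2")
      case True
      then show ?thesis using child_disj[of x1 y1 z1 i j] Suc.IH F1 F2 ne e1 e2 unfolding Inv_def by auto
    next
      case False
      have "otri F1 \<inter> otri F2 = {}" using Suc.IH F1 F2 False unfolding Inv_def by auto
      moreover have "otri g1 \<subseteq> otri F1" using child_sub[OF F1(2)] F1(3) e1 by simp
      moreover have "otri g2 \<subseteq> otri F2" using child_sub[OF F2(2)] F2(3) e2 by simp
      ultimately show ?thesis by blast
    qed
  qed
  then show ?case using D unfolding Inv_def by blast
qed

lemma Dt_distinct: "Dt (x, y, z) \<noteq> 0 \<Longrightarrow> x \<noteq> y \<and> y \<noteq> z \<and> z \<noteq> x"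
  by (auto simp: Dt_def cross_def algebra_simps)

lemma side_inj:
  assumes D: "Dt f \<noteq> 0" and i: "i < 3" and j: "j < 3" and e: "side f i = side f j"
  shows "i = j"
proof -
  obtain x y z where f: "f = (x, y, z)" by (cases f)
  have d: "x \<noteq> y" "y \<noteq> z" "z \<noteq> x" using Dt_distinct D f by auto
  have "i = 0 \<or> i = 1 \<or> i = 2" "j = 0 \<or> j = 1 \<or> j = 2" using i j by auto
  then show ?thesis using e d unfolding f side_def by (auto simp: doubleton_eq_iff)
qed

lemma side_tri:
  assumes D: "Dt f \<noteq> 0" and i: "i < 3" and e: "side f i = {u, v}"
  shows "\<exists>w. otri f = otri (u, v, w) \<and> Dt (u, v, w) \<noteq> 0"
proof -
  obtain x y z where f: "f = (x, y, z)" by (cases f)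
  have D': "Dt (x, y, z) \<noteq> 0" using D f by simp
  have r1: "otri (x, y, z) = otri (y, z, x)" "Dt (y, z, x) = Dt (x, y, z)"
    using otri_rot[of x y z] Dt_rot[of x y z] by simp_all
  have r2: "otri (x, y, z) = otri (z, x, y)" "Dt (z, x, y) = Dt (x, y, z)"
    by (simp_all add: otri_rot[of z x y] otri_rot[of y z x] Dt_rot[of z x y] Dt_rot[of y z x])
  have s0: "otri (x, y, z) = otri (y, x, z)" "Dt (y, x, z) = - Dt (x, y, z)"
    using otri_swap[of x y z] Dt_swap[of x y z] by simp_all
  have s1: "otri (x, y, z) = otri (z, y, x)" "Dt (z, y, x) = - Dt (x, y, z)"
    using r1 otri_swap[of y z x] Dt_swap[of y z x] by simp_all
  have s2: "otri (x, y, z) = otri (x, z, y)" "Dt (x, z, y) = - Dt (x, y, z)"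
    using r2 otri_swap[of z x y] Dt_swap[of z x y] by simp_all
  have "i = 0 \<or> i = 1 \<or> i = 2" using i by auto
  then show ?thesis
  proof (elim disjE)
    assume "i = 0"
    then have "(u = x \<and> v = y) \<or> (u = y \<and> v = x)" using e f by (auto simp: side_def doubleton_eq_iff)
    then show ?thesis using D' s0 f by auto
  next
    assume "i = 1"
    then have "(u = y \<and> v = z) \<or> (u = z \<and> v = y)" using e f by (auto simp: side_def doubleton_eq_iff)
    then show ?thesis using D' r1 s1 f by auto
  next
    assume "i = 2"
    then have "(u = z \<and> v = x) \<or> (u = x \<and> v = z)" using e f by (auto simp: side_def doubleton_eq_iff)
    then show ?thesis using D' r2 s2 f by auto
  qed
qed

lemma cramer: "of_real (cross a b) * w = of_real (cross w b) * a + of_real (cross a w) * b"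
  by (rule complex_eqI) (simp_all add: cross_def algebra_simps)

lemma overlap:
  assumes pos: "Dt (u, v, w1) * Dt (u, v, w2) > 0"
  shows "otri (u, v, w1) \<inter> otri (u, v, w2) \<noteq> {}"
proof -
  define D1 where "D1 = Dt (u, v, w1)"
  define D2 where "D2 = Dt (u, v, w2)"
  have D2: "D2 \<noteq> 0" using pos unfolding D2_def by auto
  define r where "r = D1 / D2"
  define s where "s = cross (w1 - u) (w2 - u) / D2"
  have r: "r > 0" using pos unfolding r_def D1_def D2_def
    by (simp add: zero_less_divide_iff zero_less_mult_iff)
  have cr: "of_real D2 * (w1 - u) = of_real (cross (w1 - u) (w2 - u)) * (v - u) + of_real D1 * (w2 - u)"
    using cramer[of "v - u" "w2 - u" "w1 - u"] unfolding D1_def D2_def Dt_def by simp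
  have w1: "w1 - u = of_real s * (v - u) + of_real r * (w2 - u)"
  proof -
    have hs: "D2 * s = cross (w1 - u) (w2 - u)" "D2 * r = D1" using D2 by (simp_all add: s_def r_def)
    have e1: "of_real D2 * (of_real s * (v - u)) = of_real (cross (w1 - u) (w2 - u)) * (v - u)"
      by (metis hs(1) mult.assoc of_real_mult)
    have e2: "of_real D2 * (of_real r * (w2 - u)) = of_real D1 * (w2 - u)"
      by (metis hs(2) mult.assoc of_real_mult)
    have "of_real D2 * (w1 - u) = of_real D2 * (of_real s * (v - u) + of_real r * (w2 - u))"
      using cr e1 e2 by (simp only: distrib_left)
    then show ?thesis using D2 by simp
  qed
  define K where "K = 1 + \<bar>s\<bar> + r"
  have K: "K > 0" using r unfolding K_def by simp
  define t where "t = 1 / (4 * K)"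
  have t: "t > 0" "t * K = 1/4" using K unfolding t_def by auto
  have tK: "t * K = t + t * \<bar>s\<bar> + t * r" by (simp add: K_def algebra_simps)
  have nn: "t * \<bar>s\<bar> \<ge> 0" "t * r \<ge> 0" using t r by simp_all
  have ts: "t * \<bar>s\<bar> \<le> 1/4" "t * r \<le> 1/4" "t \<le> 1/4"
    using tK nn t by linarith+
  have sa: "- \<bar>s\<bar> \<le> s" "s \<le> \<bar>s\<bar>" by auto
  have "t * (- \<bar>s\<bar>) \<le> t * s" by (rule mult_left_mono) (use t sa in auto)
  moreover have "t * s \<le> t * \<bar>s\<bar>" by (rule mult_left_mono) (use t sa in auto)
  ultimately have tsa: "t * s \<ge> - (t * \<bar>s\<bar>)" "t * s \<le> t * \<bar>s\<bar>" by linarith+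
  define p where "p = of_real ((1 - t)/2) * u + of_real ((1 - t)/2) * v + of_real t * w1"
  have p1: "p \<in> otri (u, v, w1)" unfolding otri_iff p_def
    by (rule exI[of _ "(1 - t)/2"], rule exI[of _ "(1 - t)/2"], rule exI[of _ t]) (use t ts in auto)
  have peq: "p = of_real ((1 + t)/2 - t * s - t * r) * u + of_real ((1 - t)/2 + t * s) * v + of_real (t * r) * w2"
  proof -
    have weq: "w1 = u + of_real s * (v - u) + of_real r * (w2 - u)" using w1 by (simp add: algebra_simps)
    show ?thesis unfolding p_def weq by (simp add: algebra_simps add_divide_distrib diff_divide_distrib)
  qed
  have sum: "t * s + t * r \<le> 1/2" using ts tsa by linarith
  have c1: "(1 + t)/2 - t * s - t * r > 0"
  proof -
    have "(1 + t)/2 - t * s - t * r = 1/2 - (t * s + t * r) + t/2" by (simp add: field_simps)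
    moreover have "t/2 > 0" using t by simp
    ultimately show ?thesis using sum by linarith
  qed
  have c2: "(1 - t)/2 + t * s > 0"
  proof -
    have "(1 - t)/2 + t * s = 1/2 - t/2 + t * s" by (simp add: field_simps)
    moreover have "t * s \<ge> - 1/4" using ts tsa by linarith
    ultimately show ?thesis using ts by linarith
  qed
  have c3: "t * r > 0" using t r by simp
  have c4: "((1 + t)/2 - t * s - t * r) + ((1 - t)/2 + t * s) + t * r = 1" by (simp add: field_simps)
  have p2: "p \<in> otri (u, v, w2)" unfolding otri_iff
    by (rule exI[of _ "(1 + t)/2 - t * s - t * r"], rule exI[of _ "(1 - t)/2 + t * s"], rule exI[of _ "t * r"])
       (use c1 c2 c3 c4 peq in blast)
  show ?thesis using p1 p2 by blast
qed

lemma finite_faces: "finite (bary_faces n)"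
  by (induction n) (auto simp: subdivide_child)

lemma finite_S: "finite (S_edges n)"
  unfolding S_edges_def using finite_faces by simp

lemma T_edges_eq: "T_edges n = (\<lambda>(f, i). side f i) ` (bary_faces n \<times> {..<3})"
  unfolding T_edges_def by auto

lemma finite_T: "finite (T_edges n)"
  unfolding T_edges_eq using finite_faces by simp

lemma S_ends_T: "e \<in> S_edges n \<Longrightarrow> S_ends e \<in> T_edges n"
proof -
  assume e: "e \<in> S_edges n"
  obtain f i where fi: "e = (f, i)" by (cases e)
  have "f \<in> bary_faces n" "i < 3" using e fi unfolding S_edges_def by auto
  then have "\<exists>f' i'. side f i = side f' i' \<and> f' \<in> bary_faces n \<and> i' < 3" by blast
  then have "side f i \<in> T_edges n" unfolding T_edges_def by simp
  then show ?thesis unfolding S_ends_def fi by simp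
qed

lemma T_S: "s \<in> T_edges n \<Longrightarrow> \<exists>e\<in>S_edges n. S_ends e = s"
proof -
  assume "s \<in> T_edges n"
  then obtain f i where fi: "s = side f i" "f \<in> bary_faces n" "i < 3" unfolding T_edges_def by blast
  then have "(f, i) \<in> S_edges n" unfolding S_edges_def by auto
  moreover have "S_ends (f, i) = s" using fi by (simp add: S_ends_def)
  ultimately show ?thesis by blast
qed

lemma side_ne: "side f i \<noteq> {}"
  by (cases f) (auto simp: side_def)

lemma side_dbl: "\<exists>u v. side f i = {u, v}"
  by (cases f) (auto simp: side_def)

lemma three_elems:
  assumes "finite X" "card X > 2"
  shows "\<exists>a b c. a \<in> X \<and> b \<in> X \<and> c \<in> X \<and> a \<noteq> b \<and> a \<noteq> c \<and> b \<noteq> c"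
proof -
  obtain a where a: "a \<in> X" using assms by fastforce
  have c1: "card (X - {a}) > 1" using assms a by simp
  have "X - {a} \<noteq> {}" using c1 by (cases "X - {a} = {}") auto
  then obtain b where b: "b \<in> X - {a}" by blast
  have c2: "card (X - {a} - {b}) > 0" using assms c1 b by simp
  have "X - {a} - {b} \<noteq> {}" using c2 by (cases "X - {a} - {b} = {}") auto
  then obtain c where c: "c \<in> X - {a} - {b}" by blast
  show ?thesis using a b c by blast
qed

lemma fiber_card: "card {e \<in> S_edges n. S_ends e = s} \<le> 2"
proof (rule ccontr)
  let ?X = "{e \<in> S_edges n. S_ends e = s}"
  assume "\<not> card ?X \<le> 2"
  then have "card ?X > 2" by simp
  moreover have "finite ?X" using finite_S by simp
  ultimately have "\<exists>a b c. a \<in> ?X \<and> b \<in> ?X \<and> c \<in> ?X \<and> a \<noteq> b \<and> a \<noteq> c \<and> b \<noteq> c"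
    by (intro three_elems)
  then obtain e1 e2 e3 where e: "e1 \<in> ?X" "e2 \<in> ?X" "e3 \<in> ?X" "e1 \<noteq> e2" "e1 \<noteq> e3" "e2 \<noteq> e3"
    by blast
  obtain f1 i1 where ee1: "e1 = (f1, i1)" by (cases e1)
  obtain f2 i2 where ee2: "e2 = (f2, i2)" by (cases e2)
  obtain f3 i3 where ee3: "e3 = (f3, i3)" by (cases e3)
  have e1S: "(f1, i1) \<in> S_edges n" "S_ends (f1, i1) = s" using e(1) ee1 by simp_all
  have e2S: "(f2, i2) \<in> S_edges n" "S_ends (f2, i2) = s" using e(2) ee2 by simp_all
  have e3S: "(f3, i3) \<in> S_edges n" "S_ends (f3, i3) = s" using e(3) ee3 by simp_all
  have F1: "f1 \<in> bary_faces n" "i1 < 3" using e1S(1) unfolding S_edges_def by auto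
  have F2: "f2 \<in> bary_faces n" "i2 < 3" using e2S(1) unfolding S_edges_def by auto
  have F3: "f3 \<in> bary_faces n" "i3 < 3" using e3S(1) unfolding S_edges_def by auto
  have sd: "side f1 i1 = s" "side f2 i2 = s" "side f3 i3 = s"
    using e1S(2) e2S(2) e3S(2) unfolding S_ends_def by simp_all
  have inv1: "\<forall>f\<in>bary_faces n. Dt f \<noteq> 0" using conjunct1[OF Inv_all[of n, unfolded Inv_def]] .
  have inv2: "\<forall>f\<in>bary_faces n. \<forall>g\<in>bary_faces n. f \<noteq> g \<longrightarrow> otri f \<inter> otri g = {}"
    using conjunct2[OF Inv_all[of n, unfolded Inv_def]] .
  have D1: "Dt f1 \<noteq> 0" using inv1 F1(1) by blast
  have D2: "Dt f2 \<noteq> 0" using inv1 F2(1) by blast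
  have D3: "Dt f3 \<noteq> 0" using inv1 F3(1) by blast
  obtain u v where uv0: "side f1 i1 = {u, v}" using side_dbl[of f1 i1] by blast
  have uv: "s = {u, v}" using uv0 sd by simp
  obtain w1 where w1: "otri f1 = otri (u, v, w1)" "Dt (u, v, w1) \<noteq> 0"
    using side_tri[OF D1 F1(2)] sd(1) uv by blast
  obtain w2 where w2: "otri f2 = otri (u, v, w2)" "Dt (u, v, w2) \<noteq> 0"
    using side_tri[OF D2 F2(2)] sd(2) uv by blast
  obtain w3 where w3: "otri f3 = otri (u, v, w3)" "Dt (u, v, w3) \<noteq> 0"
    using side_tri[OF D3 F3(2)] sd(3) uv by blast
  have d12: "f1 \<noteq> f2"
  proof
    assume h: "f1 = f2"
    then have "i1 = i2" using side_inj[OF D1 F1(2) F2(2)] sd by simp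
    then show False using e(4) ee1 ee2 h by simp
  qed
  have d13: "f1 \<noteq> f3"
  proof
    assume h: "f1 = f3"
    then have "i1 = i3" using side_inj[OF D1 F1(2) F3(2)] sd by simp
    then show False using e(5) ee1 ee3 h by simp
  qed
  have d23: "f2 \<noteq> f3"
  proof
    assume h: "f2 = f3"
    then have "i2 = i3" using side_inj[OF D2 F2(2) F3(2)] sd by simp
    then show False using e(6) ee2 ee3 h by simp
  qed
  have o12: "otri f1 \<inter> otri f2 = {}" using inv2 F1(1) F2(1) d12 by blast
  have o13: "otri f1 \<inter> otri f3 = {}" using inv2 F1(1) F3(1) d13 by blast
  have o23: "otri f2 \<inter> otri f3 = {}" using inv2 F2(1) F3(1) d23 by blast
  define a where "a = Dt (u, v, w1)"
  define b where "b = Dt (u, v, w2)"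
  define c where "c = Dt (u, v, w3)"
  have n12: "\<not> a * b > 0" using overlap[of u v w1 w2] o12 w1(1) w2(1) unfolding a_def b_def by argo
  have n13: "\<not> a * c > 0" using overlap[of u v w1 w3] o13 w1(1) w3(1) unfolding a_def c_def by argo
  have n23: "\<not> b * c > 0" using overlap[of u v w2 w3] o23 w2(1) w3(1) unfolding b_def c_def by argo
  have nz: "a \<noteq> 0" "b \<noteq> 0" "c \<noteq> 0" using w1(2) w2(2) w3(2) unfolding a_def b_def c_def by simp_all
  show False
  proof (cases "a > 0")
    case True
    have "b < 0"
    proof (rule ccontr)
      assume "\<not> b < 0" then have "b > 0" using nz by simp
      then show False using n12 True by simp
    qed
    moreover have "c < 0"
    proof (rule ccontr)
      assume "\<not> c < 0" then have "c > 0" using nz by simp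
      then show False using n13 True by simp
    qed
    ultimately show False using n23 mult_neg_neg by blast
  next
    case False
    then have a: "a < 0" using nz by simp
    have "b > 0"
    proof (rule ccontr)
      assume "\<not> b > 0" then have "b < 0" using nz by simp
      then show False using n12 a mult_neg_neg by blast
    qed
    moreover have "c > 0"
    proof (rule ccontr)
      assume "\<not> c > 0" then have "c < 0" using nz by simp
      then show False using n13 a mult_neg_neg by blast
    qed
    ultimately show False using n23 by simp
  qed
qed

lemma cmpA: "perc_prob (T_edges n) id p u v \<le> perc_prob (S_edges n) S_ends p u v"
proof -
  define g where "g s = (SOME e. e \<in> S_edges n \<and> S_ends e = s)" for s
  have g: "g s \<in> S_edges n \<and> S_ends (g s) = s" if sT: "s \<in> T_edges n" for s
  proof -
    obtain e where "e \<in> S_edges n \<and> S_ends e = s" using T_S[OF sT] by blast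
    then show ?thesis unfolding g_def by (rule someI[of "\<lambda>e. e \<in> S_edges n \<and> S_ends e = s"])
  qed
  have inj: "inj_on g (T_edges n)"
  proof (rule inj_onI)
    fix s1 s2 assume "s1 \<in> T_edges n" "s2 \<in> T_edges n" "g s1 = g s2"
    then show "s1 = s2" using g by metis
  qed
  have sub: "g ` T_edges n \<subseteq> S_edges n" using g by blast
  have d: "(undefined, 3) \<notin> S_edges n" unfolding S_edges_def by simp
  show ?thesis by (rule perc_inj[OF finite_S inj sub d]) (use g in simp)
qed

lemma cmpB: "perc_prob (S_edges n) S_ends p u v \<le> perc_prob (T_edges n \<times> (UNIV :: bool set)) (\<lambda>x. id (fst x)) p u v"
proof -
  let ?S = "S_edges n"
  define rep where "rep s = (SOME e. e \<in> ?S \<and> S_ends e = s)" for s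
  define h where "h e = (S_ends e, e = rep (S_ends e))" for e
  have rep: "rep (S_ends e) \<in> ?S \<and> S_ends (rep (S_ends e)) = S_ends e" if "e \<in> ?S" for e
    unfolding rep_def by (rule someI_ex[of "\<lambda>e'. e' \<in> ?S \<and> S_ends e' = S_ends e"]) (use that in blast)
  have inj: "inj_on h ?S"
  proof (rule inj_onI)
    fix e1 e2 assume e1: "e1 \<in> ?S" and e2: "e2 \<in> ?S" and eq: "h e1 = h e2"
    define s where "s = S_ends e1"
    have s2: "S_ends e2 = s" using eq unfolding h_def s_def by simp
    have b: "(e1 = rep s) = (e2 = rep s)" using eq s2 unfolding h_def s_def by simp
    show "e1 = e2"
    proof (rule ccontr)
      assume ne: "e1 \<noteq> e2"
      then have n1: "e1 \<noteq> rep s" and n2: "e2 \<noteq> rep s" using b by auto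
      let ?X = "{e \<in> ?S. S_ends e = s}"
      have "{e1, e2, rep s} \<subseteq> ?X" using e1 e2 s2 rep[OF e1] unfolding s_def by auto
      moreover have "finite ?X" using finite_S by simp
      ultimately have "card {e1, e2, rep s} \<le> card ?X" by (rule card_mono[rotated])
      moreover have "card {e1, e2, rep s} = 3" using ne n1 n2 by simp
      ultimately show False using fiber_card[of n s] by simp
    qed
  qed
  have sub: "h ` ?S \<subseteq> T_edges n \<times> (UNIV :: bool set)" using S_ends_T unfolding h_def by auto
  have d: "({}, True) \<notin> T_edges n \<times> (UNIV :: bool set)" unfolding T_edges_def using side_ne by (auto simp: eq_commute[of "{}"])
  show ?thesis
    by (rule perc_inj[OF _ inj sub d]) (use finite_T in \<open>simp_all add: h_def\<close>)
qed

lemma cmpB2: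
  assumes "0 \<le> p" "p \<le> 1"
  shows "perc_prob (S_edges n) S_ends p u v \<le> perc_prob (T_edges n) id (2*p - p^2) u v"
  using cmpB[of n p u v] perc_or[OF finite_T assms, of n id u v] by simp

lemma bern0: "bernoulli_pmf 0 = return_pmf False"
  by (rule pmf_eqI) (simp add: pmf_return split: split_indicator)

lemma perc0:
  assumes "finite E" "u \<noteq> v"
  shows "perc_prob E ends 0 u v = 0"
proof -
  have "Pi_pmf E False (\<lambda>_. bernoulli_pmf 0) = return_pmf (\<lambda>x. if x \<in> E then False else False)"
    unfolding bern0 using assms(1) by simp
  moreover have "\<not> open_connected E ends (\<lambda>x. if x \<in> E then False else False) u v"
    using assms(2) unfolding open_connected_def by simp
  ultimately show ?thesis unfolding perc_prob_def by (simp add: measure_return split: split_indicator)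
qed

theorem theorem4p9:
  shows "p_T / 2 \<le> p_S \<and> p_S \<le> p_T"
proof -
  define PT where "PT n p = perc_prob (T_edges n) id p bv0 bv1" for n p
  define PS where "PS n p = perc_prob (S_edges n) S_ends p bv0 bv1" for n p
  define AT where "AT = {p \<in> {0..1}. (\<lambda>n. PT n p) \<longlonglongrightarrow> 0}"
  define AS where "AS = {p \<in> {0..1}. (\<lambda>n. PS n p) \<longlonglongrightarrow> 0}"
  have pT: "p_T = Sup AT" unfolding p_T_def crit_prob_def AT_def PT_def by simp
  have pS: "p_S = Sup AS" unfolding p_S_def crit_prob_def AS_def PS_def by simp
  have ne: "bv0 \<noteq> bv1" by (simp add: bv0_def bv1_def)
  have "\<And>n. PT n 0 = 0" unfolding PT_def using perc0[OF finite_T ne] by simp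
  then have T0: "0 \<in> AT" unfolding AT_def by simp
  have "\<And>n. PS n 0 = 0" unfolding PS_def using perc0[OF finite_S ne] by simp
  then have S0: "0 \<in> AS" unfolding AS_def by simp
  have bT: "bdd_above AT" unfolding AT_def by (rule bdd_aboveI[of _ 1]) auto
  have bS: "bdd_above AS" unfolding AS_def by (rule bdd_aboveI[of _ 1]) auto
  have T1: "p_T \<le> 1" unfolding pT
  proof (rule cSup_least)
    show "AT \<noteq> {}" using T0 by blast
    fix x assume "x \<in> AT" then show "x \<le> 1" by (simp add: AT_def)
  qed
  have S0': "0 \<le> p_S" unfolding pS using S0 bS by (rule cSup_upper)
  have PTnn: "\<And>n p. PT n p \<ge> 0" unfolding PT_def perc_prob_def by simp
  have PSnn: "\<And>n p. PS n p \<ge> 0" unfolding PS_def perc_prob_def by simp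
  have sub: "AS \<subseteq> AT"
  proof
    fix p assume "p \<in> AS"
    then have p: "p \<in> {0..1}" "(\<lambda>n. PS n p) \<longlonglongrightarrow> 0" unfolding AS_def by auto
    have "(\<lambda>n. PT n p) \<longlonglongrightarrow> 0"
    proof (rule tendsto_sandwich[OF _ _ tendsto_const p(2)])
      show "\<forall>\<^sub>F n in sequentially. 0 \<le> PT n p" using PTnn by simp
      show "\<forall>\<^sub>F n in sequentially. PT n p \<le> PS n p" unfolding PT_def PS_def using cmpA by simp
    qed
    then show "p \<in> AT" using p unfolding AT_def by simp
  qed
  have part2: "p_S \<le> p_T" unfolding pS pT using S0 sub bT by (intro cSup_subset_mono) auto
  have part1: "p_T / 2 \<le> p_S"
  proof (rule ccontr)
    assume "\<not> p_T / 2 \<le> p_S"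
    then have lt: "p_S < p_T / 2" by simp
    define p where "p = (p_S + p_T / 2) / 2"
    have p: "p_S < p" "p < p_T / 2" "0 \<le> p" "p \<le> 1" using lt S0' T1 unfolding p_def by auto
    have "2 * p < Sup AT" using p pT by simp
    then obtain r where r: "r \<in> AT" "2 * p < r" using less_cSup_iff[OF _ bT] T0 by blast
    have r': "r \<le> 1" "(\<lambda>n. PT n r) \<longlonglongrightarrow> 0" using r unfolding AT_def by auto
    have pp: "p * p \<le> 1 * p" using p by (intro mult_right_mono) auto
    have pp0: "0 \<le> p * p" by simp
    have q: "0 \<le> 2 * p - p^2" "2 * p - p^2 \<le> r" using p pp pp0 r unfolding power2_eq_square by linarith+
    have "(\<lambda>n. PS n p) \<longlonglongrightarrow> 0"
    proof (rule tendsto_sandwich[OF _ _ tendsto_const r'(2)])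
      show "\<forall>\<^sub>F n in sequentially. 0 \<le> PS n p" using PSnn by simp
      have "PS n p \<le> PT n r" for n
      proof -
        have "PS n p \<le> PT n (2 * p - p^2)" unfolding PS_def PT_def using cmpB2 p by simp
        also have "\<dots> \<le> PT n r" unfolding PT_def using perc_mono[OF finite_T q r'(1)] .
        finally show ?thesis .
      qed
      then show "\<forall>\<^sub>F n in sequentially. PS n p \<le> PT n r" by simp
    qed
    then have "p \<in> AS" using p unfolding AS_def by simp
    then have "p \<le> p_S" unfolding pS using bS by (rule cSup_upper)
    then show False using p by simp
  qed
  show ?thesis using part1 part2 by simp
qed

end
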